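(* Let $M$ be a Mealy machine, $A$ an NFA over $I_M$, $\sqsubseteq$ a reflexive relation on $S_A$ such that $a\sqsubseteq b$ implies $\mathcal{L}_A(a)\subseteq\mathcal{L}_A(b)$, $E\subseteq\mathcal{L}_A$ a finite prefix-closed set, and $k\in\mathbb{N}$. Suppose that every word $\alpha\in\mathcal{L}_A\setminus E$ has a prefix $\beta\in E$ which is $(k+1)$-saturated. Then $E$ is $k$-complete in the context of $\mathcal{L}_A$: for every Mealy machine $N$ with the same input/output alphabets as $M$ and at most $k$ states, $M\sim_E N$ implies $M\sim_{\mathcal{L}_A}N$.
   Context: Mealy machines $M=(I_M,O_M,S_M,\delta_M,\lambda_M,r_M)$ have $\delta_M,\lambda_M$ extended to words as usual, with $\delta_M(\alpha)=\delta_M(r_M,\alpha)$, $\lambda_M(\alpha)=\lambda_M(r_M,\alpha)$. NFAs $A=(I_M,S_A,\Delta_A,r_A)$ have all states accepting; $\Delta_A(a,\alpha)$ is the set of states reachable from $a$ by a run on $\alpha$, $\Delta_A(\alpha)=\Delta_A(r_A,\alpha)$, $\mathcal{L}_A(a)=\{\alpha:\Delta_A(a,\alpha)\ne\emptyset\}$, $\mathcal{L}_A=\mathcal{L}_A(r_A)$. For a set $V$ of words, $M\sim_V N$ means $\lambda_M(\alpha)=\lambda_N(\alpha)$ for all $\alpha\in V$. Locations $(s,a),(t,b)\in S_M\times S_A$ are incompatible, $(s,a)\nsim(t,b)$, if some $\alpha\in\mathcal{L}_A(a)\cap\mathcal{L}_A(b)$ has $\lambda_M(s,\alpha)\ne\lambda_M(t,\alpha)$.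 Words $\alpha,\beta\in E$ are $E$-separable, $\alpha\,\#_E\,\beta$, if some $\gamma$ has $\alpha\gamma,\beta\gamma\in E$ and $\lambda_M(\delta_M(\alpha),\gamma)\ne\lambda_M(\delta_M(\beta),\gamma)$. The context tree $\Gamma$ is the set of nodes $a/\alpha$ (pairs) with $\alpha\in\mathcal{L}_A$ and $a\in\Delta_A(\alpha)$; for $D\subseteq\mathcal{L}_A$, $\Gamma(D)$ is the set of nodes $a/\alpha$ with $\alpha\in D$. A node $b/\beta$ precedes $a/\alpha$, written $b/\beta\preceq a/\alpha$, if $\alpha=\beta\gamma$ for some $\gamma$ with $a\in\Delta_A(b,\gamma)$. A ranking is a sequence of nodes $(a_j/\alpha_j)_{j=1}^m$ with $\alpha_1<\dots<\alpha_m$ (strict prefixes); it is monotonous if $a_1\sqsupseteq a_2\sqsupseteq\dots\sqsupseteq a_m$. $E$ is incompatibility-preserving w.r.t. a set of nodes $R\subseteq\Gamma(E)$ if for all $a/\alpha,b/\beta\in R$ with $(\delta_M(\alpha),a)\nsim(\delta_M(\beta),b)$ we have $\alpha\,\#_E\,\beta$. A node $a/\alpha$ is $k$-saturated if there is a monotonous ranking $R\subseteq\Gamma(E)$ with $|R|=k$, $b/\beta\preceq a/\alpha$ for all $b/\beta\in R$, and $E$ incompatibility-preserving w.r.t. $R$. A word $\alpha\in\mathcal{L}_A$ is $k$-saturated if every node $a/\alpha$ with $a\in\Delta_A(\alpha)$ is $k$-saturated. *)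

theory Defs
  imports "HOL-Library.Sublist"
begin

record ('s, 'i, 'o) mealy =
  m_states :: "'s set"
  m_trans  :: "'s \<Rightarrow> 'i \<Rightarrow> 's"
  m_out    :: "'s \<Rightarrow> 'i \<Rightarrow> 'o"
  m_init   :: 's

definition mealy_machine :: "('s, 'i, 'o) mealy \<Rightarrow> bool" where
  "mealy_machine M \<longleftrightarrow> finite (m_states M) \<and> m_init M \<in> m_states M \<and>
     (\<forall>s\<in>m_states M. \<forall>x. m_trans M s x \<in> m_states M)"

fun delta_w :: "('s, 'i, 'o) mealy \<Rightarrow> 's \<Rightarrow> 'i list \<Rightarrow> 's" where
  "delta_w M s [] = s"
| "delta_w M s (x # xs) = delta_w M (m_trans M s x) xs"

fun lambda_w :: "('s, 'i, 'o) mealy \<Rightarrow> 's \<Rightarrow> 'i list \<Rightarrow> 'o list" where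
  "lambda_w M s [] = []"
| "lambda_w M s (x # xs) = m_out M s x # lambda_w M (m_trans M s x) xs"

definition delta0 :: "('s, 'i, 'o) mealy \<Rightarrow> 'i list \<Rightarrow> 's" where
  "delta0 M \<alpha> = delta_w M (m_init M) \<alpha>"

definition lambda0 :: "('s, 'i, 'o) mealy \<Rightarrow> 'i list \<Rightarrow> 'o list" where
  "lambda0 M \<alpha> = lambda_w M (m_init M) \<alpha>"

definition equiv_on :: "('s, 'i, 'o) mealy \<Rightarrow> 'i list set \<Rightarrow> ('q, 'i, 'o) mealy \<Rightarrow> bool" where
  "equiv_on M V N \<longleftrightarrow> (\<forall>\<alpha>\<in>V. lambda0 M \<alpha> = lambda0 N \<alpha>)"

record ('a, 'i) nfa =
  a_states :: "'a set"
  a_trans  :: "'a \<Rightarrow> 'i \<Rightarrow> 'a set"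
  a_init   :: 'a

definition nfa :: "('a, 'i) nfa \<Rightarrow> bool" where
  "nfa A \<longleftrightarrow> finite (a_states A) \<and> a_init A \<in> a_states A \<and>
     (\<forall>a\<in>a_states A. \<forall>x. a_trans A a x \<subseteq> a_states A)"

fun Delta_w :: "('a, 'i) nfa \<Rightarrow> 'a \<Rightarrow> 'i list \<Rightarrow> 'a set" where
  "Delta_w A a [] = {a}"
| "Delta_w A a (x # xs) = (\<Union>b\<in>a_trans A a x. Delta_w A b xs)"

definition Delta0 :: "('a, 'i) nfa \<Rightarrow> 'i list \<Rightarrow> 'a set" where
  "Delta0 A \<alpha> = Delta_w A (a_init A) \<alpha>"

definition lang_from :: "('a, 'i) nfa \<Rightarrow> 'a \<Rightarrow> 'i list set" where
  "lang_from A a = {\<alpha>. Delta_w A a \<alpha> \<noteq> {}}"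

definition lang :: "('a, 'i) nfa \<Rightarrow> 'i list set" where
  "lang A = lang_from A (a_init A)"

definition incompatible ::
  "('s, 'i, 'o) mealy \<Rightarrow> ('a, 'i) nfa \<Rightarrow> 's \<times> 'a \<Rightarrow> 's \<times> 'a \<Rightarrow> bool" where
  "incompatible M A p q \<longleftrightarrow>
     (case p of (s, a) \<Rightarrow> case q of (t, b) \<Rightarrow>
       (\<exists>\<alpha>\<in>lang_from A a \<inter> lang_from A b. lambda_w M s \<alpha> \<noteq> lambda_w M t \<alpha>))"

definition separable :: "('s, 'i, 'o) mealy \<Rightarrow> 'i list set \<Rightarrow> 'i list \<Rightarrow> 'i list \<Rightarrow> bool" where
  "separable M E \<alpha> \<beta> \<longleftrightarrow> \<alpha> \<in> E \<and> \<beta> \<in> E \<and>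
     (\<exists>\<gamma>. \<alpha> @ \<gamma> \<in> E \<and> \<beta> @ \<gamma> \<in> E \<and>
          lambda_w M (delta0 M \<alpha>) \<gamma> \<noteq> lambda_w M (delta0 M \<beta>) \<gamma>)"

text \<open>Nodes \<open>a/\<alpha>\<close> are represented as pairs \<open>(a, \<alpha>)\<close>. \<open>context_tree A D\<close> is \<open>\<Gamma>(D)\<close>.\<close>
definition context_tree :: "('a, 'i) nfa \<Rightarrow> 'i list set \<Rightarrow> ('a \<times> 'i list) set" where
  "context_tree A D = {(a, \<alpha>). \<alpha> \<in> lang A \<and> \<alpha> \<in> D \<and> a \<in> Delta0 A \<alpha>}"

definition precedes :: "('a, 'i) nfa \<Rightarrow> 'a \<times> 'i list \<Rightarrow> 'a \<times> 'i list \<Rightarrow> bool" where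
  "precedes A n1 n2 \<longleftrightarrow>
     (case n1 of (b, \<beta>) \<Rightarrow> case n2 of (a, \<alpha>) \<Rightarrow>
        (\<exists>\<gamma>. \<alpha> = \<beta> @ \<gamma> \<and> a \<in> Delta_w A b \<gamma>))"

definition ranking :: "('a \<times> 'i list) list \<Rightarrow> bool" where
  "ranking R \<longleftrightarrow> (\<forall>j. Suc j < length R \<longrightarrow> strict_prefix (snd (R ! j)) (snd (R ! Suc j)))"

definition monotonous :: "('a \<Rightarrow> 'a \<Rightarrow> bool) \<Rightarrow> ('a \<times> 'i list) list \<Rightarrow> bool" where
  "monotonous le R \<longleftrightarrow> (\<forall>j. Suc j < length R \<longrightarrow> le (fst (R ! Suc j)) (fst (R ! j)))"

definition incompat_preserving ::
  "('s, 'i, 'o) mealy \<Rightarrow> ('a, 'i) nfa \<Rightarrow> 'i list set \<Rightarrow> ('a \<times> 'i list) set \<Rightarrow> bool" where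
  "incompat_preserving M A E R \<longleftrightarrow>
     (\<forall>(a, \<alpha>)\<in>R. \<forall>(b, \<beta>)\<in>R.
        incompatible M A (delta0 M \<alpha>, a) (delta0 M \<beta>, b) \<longrightarrow> separable M E \<alpha> \<beta>)"

definition node_saturated ::
  "('s, 'i, 'o) mealy \<Rightarrow> ('a, 'i) nfa \<Rightarrow> ('a \<Rightarrow> 'a \<Rightarrow> bool) \<Rightarrow> 'i list set \<Rightarrow> nat
     \<Rightarrow> 'a \<times> 'i list \<Rightarrow> bool" where
  "node_saturated M A le E k n \<longleftrightarrow>
     (\<exists>R. ranking R \<and> monotonous le R \<and> set R \<subseteq> context_tree A E \<and> length R = k \<and>
          (\<forall>m\<in>set R. precedes A m n) \<and> incompat_preserving M A E (set R))"

definition word_saturated ::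
  "('s, 'i, 'o) mealy \<Rightarrow> ('a, 'i) nfa \<Rightarrow> ('a \<Rightarrow> 'a \<Rightarrow> bool) \<Rightarrow> 'i list set \<Rightarrow> nat
     \<Rightarrow> 'i list \<Rightarrow> bool" where
  "word_saturated M A le E k \<alpha> \<longleftrightarrow>
     \<alpha> \<in> lang A \<and> (\<forall>a\<in>Delta0 A \<alpha>. node_saturated M A le E k (a, \<alpha>))"

end

theory Submission
  imports Defs
begin

lemma lambda_w_append:
  "lambda_w M s (xs @ ys) = lambda_w M s xs @ lambda_w M (delta_w M s xs) ys"
  by (induction xs arbitrary: s) auto

lemma delta_w_append: "delta_w M s (xs @ ys) = delta_w M (delta_w M s xs) ys"
  by (induction xs arbitrary: s) auto

lemma lambda0_append:
  "lambda0 M (xs @ ys) = lambda0 M xs @ lambda_w M (delta0 M xs) ys"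
  unfolding lambda0_def delta0_def by (rule lambda_w_append)

lemma Delta_w_append:
  "Delta_w A a (xs @ ys) = (\<Union>b\<in>Delta_w A a xs. Delta_w A b ys)"
  by (induction xs arbitrary: a) auto

lemma Delta_w_states:
  assumes "nfa A" "a \<in> a_states A"
  shows "Delta_w A a xs \<subseteq> a_states A"
  using assms(2)
proof (induction xs arbitrary: a)
  case Nil then show ?case by simp
next
  case (Cons x xs)
  have "a_trans A a x \<subseteq> a_states A" using assms(1) Cons.prems unfolding nfa_def by blast
  then show ?case using Cons.IH by auto
qed

lemma delta_w_states:
  assumes "mealy_machine N" "s \<in> m_states N"
  shows "delta_w N s xs \<in> m_states N"
  using assms(2)
proof (induction xs arbitrary: s)
  case Nil then show ?case by simp
next
  case (Cons x xs)
  then show ?case using assms(1) unfolding mealy_machine_def by auto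
qed

lemma ranking_chain:
  assumes "ranking R" "i < j" "j < length R"
  shows "length (snd (R ! i)) < length (snd (R ! j))"
  using assms(2,3)
proof (induction j)
  case 0 then show ?case by simp
next
  case (Suc j)
  have "strict_prefix (snd (R ! j)) (snd (R ! Suc j))"
    using assms(1) Suc.prems unfolding ranking_def by auto
  then have "length (snd (R ! j)) < length (snd (R ! Suc j))"
    using prefix_length_less by blast
  then show ?case using Suc by (cases "i = j") auto
qed

lemma mono_chain:
  assumes "monotonous le R"
    and "\<forall>a\<in>a_states A. \<forall>b\<in>a_states A. le a b \<longrightarrow> lang_from A a \<subseteq> lang_from A b"
    and "\<forall>m\<in>set R. fst m \<in> a_states A"
    and "i \<le> j" "j < length R"
  shows "lang_from A (fst (R ! j)) \<subseteq> lang_from A (fst (R ! i))"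
  using assms(4,5)
proof (induction j)
  case 0 then show ?case by simp
next
  case (Suc j)
  show ?case
  proof (cases "i = Suc j")
    case True then show ?thesis by simp
  next
    case False
    have le: "le (fst (R ! Suc j)) (fst (R ! j))"
      using assms(1) Suc.prems unfolding monotonous_def by auto
    have "fst (R ! Suc j) \<in> a_states A" "fst (R ! j) \<in> a_states A"
      using assms(3) Suc.prems by auto
    then have "lang_from A (fst (R ! Suc j)) \<subseteq> lang_from A (fst (R ! j))"
      using assms(2) le by blast
    moreover have "lang_from A (fst (R ! j)) \<subseteq> lang_from A (fst (R ! i))"
      using Suc False by auto
    ultimately show ?thesis by blast
  qed
qed

theorem theorem2:
  fixes M :: "('s, 'i, 'o) mealy" and A :: "('a, 'i) nfa"
    and le :: "'a \<Rightarrow> 'a \<Rightarrow> bool" and E :: "'i list set" and k :: nat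
  assumes "mealy_machine M" and "nfa A"
    and "\<forall>a\<in>a_states A. le a a"
    and "\<forall>a\<in>a_states A. \<forall>b\<in>a_states A. le a b \<longrightarrow> lang_from A a \<subseteq> lang_from A b"
    and "E \<subseteq> lang A" and "finite E"
    and "\<forall>\<alpha> \<beta>. \<alpha> @ \<beta> \<in> E \<longrightarrow> \<alpha> \<in> E"
    and "\<forall>\<alpha>\<in>lang A - E. \<exists>\<beta>. prefix \<beta> \<alpha> \<and> \<beta> \<in> E \<and> word_saturated M A le E (k + 1) \<beta>"
  shows "\<forall>N :: ('q, 'i, 'o) mealy. mealy_machine N \<and> card (m_states N) \<le> k \<longrightarrow>
           equiv_on M E N \<longrightarrow> equiv_on M (lang A) N"
proof (intro allI impI)
  fix N :: "('q, 'i, 'o) mealy"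
  assume NN: "mealy_machine N \<and> card (m_states N) \<le> k" and eqE: "equiv_on M E N"
  have finN: "finite (m_states N)" and cardN: "card (m_states N) \<le> k"
    and initN: "m_init N \<in> m_states N"
    using NN unfolding mealy_machine_def by auto
  have eE: "\<And>x. x \<in> E \<Longrightarrow> lambda0 M x = lambda0 N x" using eqE unfolding equiv_on_def by auto
  have init_states: "a_init A \<in> a_states A" using assms(2) unfolding nfa_def by auto
  have main: "\<forall>\<alpha>. length \<alpha> = n \<longrightarrow> \<alpha> \<in> lang A \<longrightarrow> lambda0 M \<alpha> = lambda0 N \<alpha>" for n
  proof (induction n rule: less_induct)
    case (less n)
    show ?case
    proof (intro allI impI)
      fix \<alpha> assume len: "length \<alpha> = n" and aL: "\<alpha> \<in> lang A"
      show "lambda0 M \<alpha> = lambda0 N \<alpha>"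
      proof (rule ccontr)
        assume diff: "lambda0 M \<alpha> \<noteq> lambda0 N \<alpha>"
        have IH: "\<And>x. length x < length \<alpha> \<Longrightarrow> x \<in> lang A \<Longrightarrow> lambda0 M x = lambda0 N x"
          using less len by blast
        have "\<alpha> \<notin> E" using diff eE by blast
        then obtain \<beta> where pb: "prefix \<beta> \<alpha>" and bE: "\<beta> \<in> E"
          and ws: "word_saturated M A le E (k + 1) \<beta>" using assms(8) aL by blast
        obtain \<gamma> where ag: "\<alpha> = \<beta> @ \<gamma>" using pb prefix_def by blast
        have "Delta_w A (a_init A) (\<beta> @ \<gamma>) \<noteq> {}" using aL ag unfolding lang_def lang_from_def by auto
        then obtain a where a: "a \<in> Delta0 A \<beta>" and ga: "\<gamma> \<in> lang_from A a"
          unfolding Delta_w_append Delta0_def lang_from_def by auto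
        have "node_saturated M A le E (k + 1) (a, \<beta>)" using ws a unfolding word_saturated_def by auto
        then obtain R where rk: "ranking R" and mon: "monotonous le R"
          and RE: "set R \<subseteq> context_tree A E" and lR: "length R = k + 1"
          and prec: "\<forall>m\<in>set R. precedes A m (a, \<beta>)"
          and ip: "incompat_preserving M A E (set R)"
          unfolding node_saturated_def by blast
        have Rst: "\<forall>m\<in>set R. fst m \<in> a_states A"
        proof
          fix m assume "m \<in> set R"
          then have "fst m \<in> Delta0 A (snd m)" using RE unfolding context_tree_def by auto
          then show "fst m \<in> a_states A" using Delta_w_states[OF assms(2) init_states]
            unfolding Delta0_def by auto
        qed
        define f where "f = (\<lambda>j. delta0 N (snd (R ! j)))"
        have "f ` {..<k+1} \<subseteq> m_states N"
          unfolding f_def delta0_def using delta_w_states[OF _ initN] NN by auto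
        moreover have "card (m_states N) < card {..<k+1}" using cardN by simp
        ultimately have "\<not> inj_on f {..<k+1}"
          using card_inj_on_le[of f "{..<k+1}" "m_states N"] finN by fastforce
        then obtain i j where ij: "i < j" "j < k + 1" and fij: "f i = f j"
          unfolding inj_on_def by (metis lessThan_iff linorder_neqE_nat)
        obtain ai \<alpha>i where Ri: "R ! i = (ai, \<alpha>i)" by fastforce
        obtain aj \<alpha>j where Rj: "R ! j = (aj, \<alpha>j)" by fastforce
        have inR: "(ai, \<alpha>i) \<in> set R" "(aj, \<alpha>j) \<in> set R" using Ri Rj ij lR
          by (metis nth_mem less_trans)+
        have iE: "\<alpha>i \<in> E" and jE: "\<alpha>j \<in> E" and aiD: "ai \<in> Delta0 A \<alpha>i"
          using inR RE unfolding context_tree_def by auto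
        have lij: "length \<alpha>i < length \<alpha>j" using ranking_chain[OF rk ij(1)] ij lR Ri Rj by auto
        have Nij: "delta0 N \<alpha>i = delta0 N \<alpha>j" using fij Ri Rj unfolding f_def by simp
        have "precedes A (aj, \<alpha>j) (a, \<beta>)" using prec inR by auto
        then obtain \<sigma> where bs: "\<beta> = \<alpha>j @ \<sigma>" and aD: "a \<in> Delta_w A aj \<sigma>"
          unfolding precedes_def by auto
        have sgj: "\<sigma> @ \<gamma> \<in> lang_from A aj"
          using aD ga unfolding lang_from_def by (auto simp: Delta_w_append)
        have "lang_from A (fst (R ! j)) \<subseteq> lang_from A (fst (R ! i))"
          using mono_chain[OF mon assms(4) Rst, of i j] ij lR by auto
        then have sgi: "\<sigma> @ \<gamma> \<in> lang_from A ai" using sgj Ri Rj by auto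
        have "\<alpha>i @ \<sigma> @ \<gamma> \<in> lang A"
          using aiD sgi unfolding lang_def lang_from_def Delta0_def by (auto simp: Delta_w_append)
        moreover have "length (\<alpha>i @ \<sigma> @ \<gamma>) < length \<alpha>" using lij ag bs by simp
        ultimately have eqi: "lambda0 M (\<alpha>i @ \<sigma> @ \<gamma>) = lambda0 N (\<alpha>i @ \<sigma> @ \<gamma>)" using IH by blast
        have eqi': "lambda_w M (delta0 M \<alpha>i) (\<sigma> @ \<gamma>) = lambda_w N (delta0 N \<alpha>i) (\<sigma> @ \<gamma>)"
          using eqi eE[OF iE] unfolding lambda0_append by simp
        have eqj': "lambda_w M (delta0 M \<alpha>j) (\<sigma> @ \<gamma>) \<noteq> lambda_w N (delta0 N \<alpha>j) (\<sigma> @ \<gamma>)"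
          proof
          assume h: "lambda_w M (delta0 M \<alpha>j) (\<sigma> @ \<gamma>) = lambda_w N (delta0 N \<alpha>j) (\<sigma> @ \<gamma>)"
          have "lambda0 M (\<alpha>j @ (\<sigma> @ \<gamma>)) = lambda0 N (\<alpha>j @ (\<sigma> @ \<gamma>))"
            unfolding lambda0_append using h eE[OF jE] by simp
          moreover have "\<alpha> = \<alpha>j @ (\<sigma> @ \<gamma>)" using ag bs by simp
          ultimately show False using diff by simp
        qed
        have "\<not> incompatible M A (delta0 M \<alpha>i, ai) (delta0 M \<alpha>j, aj)"
        proof
          assume "incompatible M A (delta0 M \<alpha>i, ai) (delta0 M \<alpha>j, aj)"
          then have "separable M E \<alpha>i \<alpha>j" using ip inR unfolding incompat_preserving_def by blast
          then obtain g where g1: "\<alpha>i @ g \<in> E" and g2: "\<alpha>j @ g \<in> E"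
            and gd: "lambda_w M (delta0 M \<alpha>i) g \<noteq> lambda_w M (delta0 M \<alpha>j) g"
            unfolding separable_def by blast
          have "lambda_w M (delta0 M \<alpha>i) g = lambda_w N (delta0 N \<alpha>i) g"
            using eE[OF g1] eE[OF iE] unfolding lambda0_append by simp
          moreover have "lambda_w M (delta0 M \<alpha>j) g = lambda_w N (delta0 N \<alpha>j) g"
            using eE[OF g2] eE[OF jE] unfolding lambda0_append by simp
          ultimately show False using gd Nij by simp
        qed
        then have "lambda_w M (delta0 M \<alpha>i) (\<sigma> @ \<gamma>) = lambda_w M (delta0 M \<alpha>j) (\<sigma> @ \<gamma>)"
          using sgi sgj unfolding incompatible_def by auto
        then show False using eqi' eqj' Nij by simp
      qed
    qed
  qed
  show "equiv_on M (lang A) N" unfolding equiv_on_def using main by blast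
qed

end
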